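(* Let $V$ be a real symmetric positive-definite $N\times N$ matrix and $\alpha>0$. Then: 1) $L_-$ and its orthogonal complement $L_0$ in $\mathbb R^{2N}$ are invariant under $A$; 2) the spectrum of the restriction $A_-$ of $A$ to $L_-$ lies in the open left half-plane, $\|e^{tA_-}\|\to0$ exponentially fast as $t\to\infty$, and $$L_-=\{\psi\in\mathbb R^{2N}: H(e^{tA}\psi)\to0\text{ as }t\to\infty\}.$$
   Context: $\psi=(q,p)\in\mathbb R^{2N}$, $H(\psi)=\frac12\sum_ip_i^2+\frac12\sum_{i,j}V(i,j)q_iq_j$. $A=\begin{pmatrix}0&E\\-V&-\alpha D\end{pmatrix}$, where $E$ is the $N\times N$ identity and $D$ is the diagonal $N\times N$ matrix with $D_{11}=1$ and all other entries $0$ (damping acting on $p_1$ only). $l_V$ is the span of $V^ke_1$, $k\ge0$ ($e_1$ the first standard basis vector of $\mathbb R^N$), and $L_-=\{(q,p):q,p\in l_V\}$. *)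

theory Defs
  imports "HOL-Analysis.Analysis"
begin

text \<open>Phase space R^{2N} is rendered as pairs (q,p) of vectors in real^'n
 (the product inner product is the standard one on R^{2N}).
 The distinguished index i0 plays the role of the first coordinate (e_1).\<close>

definition oscA :: "real^'n^'n \<Rightarrow> real \<Rightarrow> 'n \<Rightarrow> ((real^'n) \<times> (real^'n)) \<Rightarrow> ((real^'n) \<times> (real^'n))" where
  "oscA V \<alpha> i0 \<psi> = (snd \<psi>, - (V *v fst \<psi>) - \<alpha> *\<^sub>R (\<chi> i. if i = i0 then snd \<psi> $ i else 0))"

definition hamH :: "real^'n^'n \<Rightarrow> ((real^'n) \<times> (real^'n)) \<Rightarrow> real" where
  "hamH V \<psi> = (1/2) * (\<Sum>i\<in>UNIV. (snd \<psi> $ i)^2)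
      + (1/2) * (\<Sum>i\<in>UNIV. \<Sum>j\<in>UNIV. V $ i $ j * (fst \<psi> $ i) * (fst \<psi> $ j))"

definition lV :: "real^'n^'n \<Rightarrow> 'n \<Rightarrow> (real^'n) set" where
  "lV V i0 = span (range (\<lambda>k::nat. (((*v) V) ^^ k) (axis i0 1)))"

definition Lminus :: "real^'n^'n \<Rightarrow> 'n \<Rightarrow> ((real^'n) \<times> (real^'n)) set" where
  "Lminus V i0 = {\<psi>. fst \<psi> \<in> lV V i0 \<and> snd \<psi> \<in> lV V i0}"

definition expA :: "('a::real_normed_vector \<Rightarrow> 'a) \<Rightarrow> real \<Rightarrow> 'a \<Rightarrow> 'a" where
  "expA A t x = (\<Sum>k. (t ^ k / fact k) *\<^sub>R ((A ^^ k) x))"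

text \<open>lam is in the spectrum of the restriction of the real linear map f to the
 invariant subspace L: there is a nonzero complex eigenvector u + i v with u, v in L.\<close>
definition complex_eigenvalue_on :: "('a::real_vector \<Rightarrow> 'a) \<Rightarrow> 'a set \<Rightarrow> complex \<Rightarrow> bool" where
  "complex_eigenvalue_on f L lam \<longleftrightarrow> (\<exists>u v. u \<in> L \<and> v \<in> L \<and> (u \<noteq> 0 \<or> v \<noteq> 0) \<and>
      f u = Re lam *\<^sub>R u - Im lam *\<^sub>R v \<and> f v = Im lam *\<^sub>R u + Re lam *\<^sub>R v)"

end

theory Submission
  imports Defs "HOL-Real_Asymp.Real_Asymp"
begin

lemma linear_funpow: "linear (A::'a::real_vector \<Rightarrow> 'a) \<Longrightarrow> linear (A ^^ k)"
  by (induction k) (auto intro: linear_compose simp: linear_id)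

lemma funpow_norm_bound:
  fixes A :: "'a::real_normed_vector \<Rightarrow> 'a"
  assumes "\<And>x. norm (A x) \<le> K * norm x" "K \<ge> 0"
  shows "norm ((A ^^ k) x) \<le> K ^ k * norm x"
proof (induction k)
  case (Suc k)
  have "norm ((A ^^ Suc k) x) \<le> K * norm ((A ^^ k) x)" using assms(1)[of "(A ^^ k) x"] by simp
  also have "\<dots> \<le> K * (K ^ k * norm x)" using Suc assms(2) by (rule mult_left_mono)
  finally show ?case by simp
qed simp

lemma expA_summable:
  fixes A :: "'a::euclidean_space \<Rightarrow> 'a"
  assumes "linear A"
  shows "summable (\<lambda>k. (t ^ k / fact k) *\<^sub>R ((A ^^ k) x))"
proof -
  obtain K where K: "K > 0" "\<And>x. norm (A x) \<le> K * norm x" using linear_bounded_pos[OF assms] by blast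
  have s: "summable (\<lambda>k. inverse (fact k) * (\<bar>t\<bar> * K) ^ k * norm x)"
    using summable_mult2[OF summable_exp[of "\<bar>t\<bar> * K"]] by simp
  show ?thesis
  proof (rule summable_comparison_test[OF _ s], intro exI allI impI)
    fix k :: nat
    have "norm ((t ^ k / fact k) *\<^sub>R ((A ^^ k) x)) = (\<bar>t\<bar> ^ k / fact k) * norm ((A ^^ k) x)"
      by (simp add: power_abs)
    also have "\<dots> \<le> (\<bar>t\<bar> ^ k / fact k) * (K ^ k * norm x)"
      by (rule mult_left_mono[OF funpow_norm_bound[OF K(2)]]) (use K in auto)
    also have "\<dots> = inverse (fact k) * (\<bar>t\<bar> * K) ^ k * norm x"
      by (simp add: power_mult_distrib field_simps)
    finally show "norm ((t ^ k / fact k) *\<^sub>R ((A ^^ k) x)) \<le> inverse (fact k) * (\<bar>t\<bar> * K) ^ k * norm x" .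
  qed
qed

lemma expA_sums:
  fixes A :: "'a::euclidean_space \<Rightarrow> 'a"
  assumes "linear A"
  shows "(\<lambda>k. (t ^ k / fact k) *\<^sub>R ((A ^^ k) x)) sums expA A t x"
  unfolding expA_def using expA_summable[OF assms] by (rule summable_sums)

lemma expA_linear:
  fixes A :: "'a::euclidean_space \<Rightarrow> 'a"
  assumes "linear A"
  shows "linear (expA A t)"
proof (rule linearI)
  fix x y :: 'a and c :: real
  have "(\<lambda>k. (t ^ k / fact k) *\<^sub>R ((A ^^ k) x) + (t ^ k / fact k) *\<^sub>R ((A ^^ k) y)) sums (expA A t x + expA A t y)"
    by (intro sums_add expA_sums assms)
  moreover have "(\<lambda>k. (t ^ k / fact k) *\<^sub>R ((A ^^ k) x) + (t ^ k / fact k) *\<^sub>R ((A ^^ k) y))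
      = (\<lambda>k. (t ^ k / fact k) *\<^sub>R ((A ^^ k) (x + y)))"
    using linear_funpow[OF assms] by (simp add: linear_add scaleR_add_right)
  ultimately show "expA A t (x + y) = expA A t x + expA A t y"
    using expA_sums[OF assms, of t "x+y"] sums_unique2 by metis
  have "(\<lambda>k. c *\<^sub>R ((t ^ k / fact k) *\<^sub>R ((A ^^ k) x))) sums (c *\<^sub>R expA A t x)"
    by (intro sums_scaleR_right expA_sums assms)
  moreover have "(\<lambda>k. c *\<^sub>R ((t ^ k / fact k) *\<^sub>R ((A ^^ k) x)))
      = (\<lambda>k. (t ^ k / fact k) *\<^sub>R ((A ^^ k) (c *\<^sub>R x)))"
    using linear_funpow[OF assms] by (simp add: linear_scale mult.commute)
  ultimately show "expA A t (c *\<^sub>R x) = c *\<^sub>R expA A t x"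
    using expA_sums[OF assms, of t "c *\<^sub>R x"] sums_unique2 by metis
qed

lemma expA_comm:
  fixes A :: "'a::euclidean_space \<Rightarrow> 'a"
  assumes "linear A"
  shows "expA A t (A x) = A (expA A t x)"
proof -
  have bl: "bounded_linear A" using assms by (simp add: linear_conv_bounded_linear)
  have "(\<lambda>k. A ((t ^ k / fact k) *\<^sub>R ((A ^^ k) x))) sums A (expA A t x)"
    using bounded_linear.sums[OF bl expA_sums[OF assms]] .
  moreover have "(\<lambda>k. A ((t ^ k / fact k) *\<^sub>R ((A ^^ k) x))) = (\<lambda>k. (t ^ k / fact k) *\<^sub>R ((A ^^ k) (A x)))"
    by (simp add: linear_scale[OF assms] funpow_swap1)
  ultimately show ?thesis using expA_sums[OF assms, of t "A x"] sums_unique2 by metis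
qed

lemma expA_comm_pow:
  fixes A :: "'a::euclidean_space \<Rightarrow> 'a"
  assumes "linear A"
  shows "expA A t ((A ^^ k) x) = (A ^^ k) (expA A t x)"
  by (induction k) (simp_all add: expA_comm[OF assms])

lemma expA_zero:
  fixes A :: "'a::euclidean_space \<Rightarrow> 'a"
  assumes "linear A"
  shows "expA A 0 x = x"
proof -
  have "(\<lambda>k. ((0::real) ^ k / fact k) *\<^sub>R ((A ^^ k) x)) = (\<lambda>k. if k = 0 then (A ^^ k) x else 0)"
    by auto
  then have "(\<lambda>k. ((0::real) ^ k / fact k) *\<^sub>R ((A ^^ k) x)) sums x"
    using sums_single[of 0 "\<lambda>k. (A ^^ k) x"] by simp
  then show ?thesis using expA_sums[OF assms, of 0 x] sums_unique2 by metis
qed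

lemma expA_coord_deriv:
  fixes A :: "'a::euclidean_space \<Rightarrow> 'a"
  assumes "linear A"
  shows "((\<lambda>t. expA A t x \<bullet> b) has_field_derivative (expA A t (A x) \<bullet> b)) (at t)"
proof -
  define c where "c n = ((A ^^ n) x \<bullet> b) / fact n" for n
  have eq: "expA A s y \<bullet> b = (\<Sum>n. ((s ^ n / fact n) *\<^sub>R ((A ^^ n) y)) \<bullet> b)" for s y
    unfolding expA_def
    by (rule bounded_linear.suminf[OF bounded_linear_inner_left expA_summable[OF assms]])
  have eq1: "expA A s x \<bullet> b = (\<Sum>n. c n * s ^ n)" for s
    unfolding eq c_def by (simp add: ac_simps)
  have sm: "summable (\<lambda>n. c n * s ^ n)" for s
  proof -
    have "summable (\<lambda>n. ((s ^ n / fact n) *\<^sub>R ((A ^^ n) x)) \<bullet> b)"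
      by (rule bounded_linear.summable[OF bounded_linear_inner_left expA_summable[OF assms]])
    then show ?thesis unfolding c_def by (simp add: ac_simps)
  qed
  have d: "((\<lambda>s. \<Sum>n. c n * s ^ n) has_field_derivative (\<Sum>n. diffs c n * t ^ n)) (at t)"
    by (rule termdiffs_strong_converges_everywhere[OF sm])
  have "(\<Sum>n. diffs c n * t ^ n) = expA A t (A x) \<bullet> b"
    unfolding eq diffs_def c_def
    by (simp add: funpow_Suc_right ac_simps del: funpow.simps)
  with d eq1 show ?thesis by simp
qed

lemma expA_deriv:
  fixes A :: "'a::euclidean_space \<Rightarrow> 'a"
  assumes "linear A"
  shows "((\<lambda>t. expA A t x) has_vector_derivative expA A t (A x)) (at t)"
  unfolding has_vector_derivative_def
  apply (subst has_derivative_componentwise_within)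
  using expA_coord_deriv[OF assms, of x _ t]
  by (auto simp: has_field_derivative_def mult_commute_abs)

lemma inner_deriv:
  assumes "(z has_vector_derivative z') (at s)"
  shows "((\<lambda>s. z s \<bullet> z s) has_real_derivative 2 * (z s \<bullet> z')) (at s)"
  using bounded_bilinear.has_vector_derivative[OF bounded_bilinear_inner assms assms]
  by (simp add: has_real_derivative_iff_has_vector_derivative inner_commute)

lemma exp_mult_deriv:
  assumes "(f has_real_derivative f') (at x)"
  shows "((\<lambda>s. exp (c * s) * f s) has_real_derivative exp (c * x) * c * f x + exp (c * x) * f') (at x)"
proof -
  have "((\<lambda>s. exp (c * s)) has_real_derivative exp (c * x) * c) (at x)"
    using DERIV_chain2[OF DERIV_exp DERIV_cmult[OF DERIV_ident, of c]] by simp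
  from DERIV_mult[OF this assms] show ?thesis by (simp add: algebra_simps)
qed

lemma linear_ode_unique:
  fixes A :: "'a::euclidean_space \<Rightarrow> 'a"
  assumes lin: "linear A" and d: "\<And>s. (z has_vector_derivative A (z s)) (at s)" and z0: "z 0 = 0"
  shows "z t = 0"
proof -
  obtain K where K: "K > 0" "\<And>x. norm (A x) \<le> K * norm x" using linear_bounded_pos[OF lin] by blast
  define f where "f s = z s \<bullet> z s" for s
  have fd: "(f has_real_derivative 2 * (z s \<bullet> A (z s))) (at s)" for s
    unfolding f_def by (rule inner_deriv[OF d])
  have bnd: "\<bar>z s \<bullet> A (z s)\<bar> \<le> K * f s" for s
  proof -
    have "\<bar>z s \<bullet> A (z s)\<bar> \<le> norm (z s) * norm (A (z s))" by (rule Cauchy_Schwarz_ineq2)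
    also have "\<dots> \<le> norm (z s) * (K * norm (z s))" by (rule mult_left_mono[OF K(2)]) simp
    also have "\<dots> = K * f s" by (simp add: f_def power2_norm_eq_inner[symmetric] power2_eq_square)
    finally show ?thesis .
  qed
  have f0: "f 0 = 0" by (simp add: f_def z0)
  have fnn: "f s \<ge> 0" for s by (simp add: f_def)
  have "f t = 0"
  proof (cases "t \<ge> 0")
    case True
    define g where "g s = exp ((- 2 * K) * s) * f s" for s
    have "g t \<le> g 0"
    proof (rule DERIV_nonpos_imp_nonincreasing[OF True])
      fix x assume "0 \<le> x" "x \<le> t"
      have "(g has_real_derivative exp ((- 2 * K) * x) * (- 2 * K) * f x + exp ((- 2 * K) * x) * (2 * (z x \<bullet> A (z x)))) (at x)"
        unfolding g_def by (rule exp_mult_deriv[OF fd])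
      moreover have "exp ((- 2 * K) * x) * (- 2 * K) * f x + exp ((- 2 * K) * x) * (2 * (z x \<bullet> A (z x))) \<le> 0"
      proof -
        have "2 * (z x \<bullet> A (z x)) \<le> 2 * K * f x" using bnd[of x] by linarith
        then have "exp ((- 2 * K) * x) * (2 * (z x \<bullet> A (z x))) \<le> exp ((- 2 * K) * x) * (2 * K * f x)"
          by (rule mult_left_mono) simp
        then show ?thesis by (simp add: algebra_simps)
      qed
      ultimately show "\<exists>y. (g has_real_derivative y) (at x) \<and> y \<le> 0" by blast
    qed
    then have "exp (- 2 * K * t) * f t \<le> 0" by (simp add: g_def f0)
    moreover have "exp (- 2 * K * t) * f t \<ge> 0" using fnn by simp
    ultimately show ?thesis using fnn[of t] by (simp add: mult_le_0_iff)
  next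
    case False
    define g where "g s = exp ((2 * K) * s) * f s" for s
    have "g t \<le> g 0"
    proof (rule DERIV_nonneg_imp_nondecreasing[of t 0 g])
      show "t \<le> 0" using False by simp
      fix x assume "t \<le> x" "x \<le> 0"
      have "(g has_real_derivative exp ((2 * K) * x) * (2 * K) * f x + exp ((2 * K) * x) * (2 * (z x \<bullet> A (z x)))) (at x)"
        unfolding g_def by (rule exp_mult_deriv[OF fd])
      moreover have "exp ((2 * K) * x) * (2 * K) * f x + exp ((2 * K) * x) * (2 * (z x \<bullet> A (z x))) \<ge> 0"
      proof -
        have "2 * (z x \<bullet> A (z x)) \<ge> - (2 * K * f x)" using bnd[of x] by linarith
        then have "exp ((2 * K) * x) * (2 * (z x \<bullet> A (z x))) \<ge> exp ((2 * K) * x) * (- (2 * K * f x))"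
          by (rule mult_left_mono) simp
        moreover have "exp ((2 * K) * x) * (- (2 * K * f x)) = - (exp ((2 * K) * x) * (2 * K) * f x)"
          by simp
        ultimately show ?thesis by linarith
      qed
      ultimately show "\<exists>y. (g has_real_derivative y) (at x) \<and> y \<ge> 0" by blast
    qed
    then have "exp (2 * K * t) * f t \<le> 0" by (simp add: g_def f0)
    then show ?thesis using fnn[of t] by (simp add: mult_le_0_iff)
  qed
  then show ?thesis by (simp add: f_def)
qed

lemma expA_add:
  fixes A :: "'a::euclidean_space \<Rightarrow> 'a"
  assumes lin: "linear A"
  shows "expA A (s + t) x = expA A s (expA A t x)"
proof -
  define z where "z s = expA A (s + t) x - expA A s (expA A t x)" for s
  have "z s = 0"
  proof (rule linear_ode_unique[OF lin])
    fix s
    have d1: "((\<lambda>s. expA A (s + t) x) has_vector_derivative expA A (s + t) (A x)) (at s)"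
    proof -
      have "((\<lambda>s. s + t) has_vector_derivative 1) (at s)"
        by (auto intro!: derivative_eq_intros)
      from vector_diff_chain_at[OF this expA_deriv[OF lin]] show ?thesis by (simp add: o_def)
    qed
    have d2: "((\<lambda>s. expA A s (expA A t x)) has_vector_derivative expA A s (A (expA A t x))) (at s)"
      by (rule expA_deriv[OF lin])
    have "(z has_vector_derivative expA A (s + t) (A x) - expA A s (A (expA A t x))) (at s)"
      unfolding z_def by (rule has_vector_derivative_diff[OF d1 d2])
    moreover have "expA A (s + t) (A x) - expA A s (A (expA A t x)) = A (z s)"
      unfolding z_def by (simp add: expA_comm[OF lin] linear_diff[OF lin])
    ultimately show "(z has_vector_derivative A (z s)) (at s)" by simp
  next
    show "z 0 = 0" by (simp add: z_def expA_zero[OF lin])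
  qed
  then show ?thesis by (simp add: z_def)
qed

lemma expA_inv:
  fixes A :: "'a::euclidean_space \<Rightarrow> 'a"
  assumes lin: "linear A"
  shows "expA A (- t) (expA A t x) = x"
  using expA_add[OF lin, of "-t" t x] by (simp add: expA_zero[OF lin])

lemma D_eq: "(\<chi> i. if i = i0 then p $ i else 0) = (p $ i0) *\<^sub>R axis i0 (1::real)"
  by (simp add: vec_eq_iff axis_def)

lemma oscA_eq: "oscA V \<alpha> i0 (q, p) = (p, - (V *v q) - (\<alpha> * p $ i0) *\<^sub>R axis i0 1)"
  by (simp add: oscA_def D_eq)

lemma oscA_linear: "linear (oscA V \<alpha> i0)"
proof (rule linearI)
  fix x y :: "(real^'a) \<times> (real^'a)" and c :: real
  show "oscA V \<alpha> i0 (x + y) = oscA V \<alpha> i0 x + oscA V \<alpha> i0 y"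
    by (cases x, cases y) (simp add: oscA_eq algebra_simps matrix_vector_right_distrib)
  show "oscA V \<alpha> i0 (c *\<^sub>R x) = c *\<^sub>R oscA V \<alpha> i0 x"
    by (cases x) (simp add: oscA_eq algebra_simps matrix_vector_mult_scaleR)
qed

lemma lV_subspace: "subspace (lV V i0)"
  by (simp add: lV_def)

lemma axis_in_lV: "axis i0 1 \<in> lV V i0"
  unfolding lV_def by (rule span_base) (metis (mono_tags, lifting) funpow_0 range_eqI)

lemma lV_Vinv:
  assumes "x \<in> lV V i0" shows "V *v x \<in> lV V i0"
proof -
  let ?g = "\<lambda>k::nat. (((*v) V) ^^ k) (axis i0 1)"
  have "V *v x \<in> (\<lambda>x. V *v x) ` span (range ?g)" using assms by (simp add: lV_def)
  also have "\<dots> = span ((\<lambda>x. V *v x) ` range ?g)"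
    by (rule span_linear_image[symmetric]) simp
  also have "\<dots> \<subseteq> span (range ?g)"
  proof (rule span_mono)
    show "(\<lambda>x. V *v x) ` range ?g \<subseteq> range ?g"
    proof
      fix y assume "y \<in> (\<lambda>x. V *v x) ` range ?g"
      then obtain k where "y = V *v ?g k" by auto
      then have "y = ?g (Suc k)" by simp
      then show "y \<in> range ?g" by blast
    qed
  qed
  finally show ?thesis by (simp add: lV_def)
qed

lemma symV: "transpose V = V \<Longrightarrow> x \<bullet> (V *v y) = (V *v x) \<bullet> (y :: real^'n)"
  by (metis dot_lmul_matrix transpose_matrix_vector)

lemma Lminus_subspace: "subspace (Lminus V i0)"
  using lV_subspace[of V i0] unfolding Lminus_def subspace_def by auto

lemma Lminus_closed: "closed (Lminus V i0)"
  by (rule closed_subspace[OF Lminus_subspace])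

lemma Lminus_Pair: "(q, p) \<in> Lminus V i0 \<longleftrightarrow> q \<in> lV V i0 \<and> p \<in> lV V i0"
  by (simp add: Lminus_def)

lemma oscA_Lminus: "\<psi> \<in> Lminus V i0 \<Longrightarrow> oscA V \<alpha> i0 \<psi> \<in> Lminus V i0"
  using lV_subspace[of V i0] axis_in_lV[of i0 V] lV_Vinv[of "fst \<psi>" V i0]
  by (cases \<psi>) (auto simp: oscA_eq Lminus_Pair subspace_diff subspace_neg subspace_scale)

lemma L0_iff:
  fixes V :: "real^'n^'n" and \<psi> :: "(real^'n) \<times> (real^'n)"
  shows "\<psi> \<in> orthogonal_comp (Lminus V i0) \<longleftrightarrow> (\<forall>x\<in>lV V i0. fst \<psi> \<bullet> x = 0 \<and> snd \<psi> \<bullet> x = 0)"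
proof
  assume h: "\<psi> \<in> orthogonal_comp (Lminus V i0)"
  show "\<forall>x\<in>lV V i0. fst \<psi> \<bullet> x = 0 \<and> snd \<psi> \<bullet> x = 0"
  proof
    fix x assume x: "x \<in> lV V i0"
    have "(x, 0) \<in> Lminus V i0" "(0, x) \<in> Lminus V i0"
      using x lV_subspace[of V i0] by (auto simp: Lminus_Pair subspace_0)
    then have "(x, 0) \<bullet> \<psi> = 0" "(0, x) \<bullet> \<psi> = 0" using h by (auto simp: orthogonal_comp_def orthogonal_def)
    then show "fst \<psi> \<bullet> x = 0 \<and> snd \<psi> \<bullet> x = 0" by (cases \<psi>) (simp add: inner_commute)
  qed
next
  assume h: "\<forall>x\<in>lV V i0. fst \<psi> \<bullet> x = 0 \<and> snd \<psi> \<bullet> x = 0"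
  show "\<psi> \<in> orthogonal_comp (Lminus V i0)"
    unfolding orthogonal_comp_def orthogonal_def
  proof (clarify)
    fix a b assume "(a, b) \<in> Lminus V i0"
    then show "(a, b) \<bullet> \<psi> = 0" using h by (cases \<psi>) (simp add: Lminus_Pair inner_commute)
  qed
qed

lemma oscA_L0:
  fixes V :: "real^'n^'n" and \<psi> :: "(real^'n) \<times> (real^'n)"
  assumes symm: "transpose V = V" and "\<psi> \<in> orthogonal_comp (Lminus V i0)"
  shows "oscA V \<alpha> i0 \<psi> \<in> orthogonal_comp (Lminus V i0)"
proof -
  obtain q p where qp: "\<psi> = (q, p)" by (cases \<psi>)
  have h: "\<forall>x\<in>lV V i0. q \<bullet> x = 0 \<and> p \<bullet> x = 0" using assms(2) by (simp add: L0_iff qp)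
  have "p \<bullet> axis i0 1 = 0" using h axis_in_lV[of i0 V] by blast
  then have p0: "p $ i0 = 0" by (simp add: inner_axis)
  show ?thesis unfolding qp oscA_eq L0_iff
  proof (simp, intro ballI conjI)
    fix x assume x: "x \<in> lV V i0"
    show "p \<bullet> x = 0" using h x by simp
    have "(V *v q) \<bullet> x = q \<bullet> (V *v x)" using symV[OF symm] by simp
    also have "\<dots> = 0" using h lV_Vinv[OF x] by simp
    finally show "(- (V *v q) - (\<alpha> * p $ i0) *\<^sub>R axis i0 1) \<bullet> x = 0"
      by (simp add: p0 inner_diff_left)
  qed
qed

definition MF :: "real^'n^'n \<Rightarrow> (real^'n) \<times> (real^'n) \<Rightarrow> (real^'n) \<times> (real^'n)" where
  "MF V \<psi> = (V *v fst \<psi>, snd \<psi>)"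

definition QF :: "real^'n^'n \<Rightarrow> (real^'n) \<times> (real^'n) \<Rightarrow> real" where
  "QF V \<psi> = \<psi> \<bullet> MF V \<psi>"

lemma MF_linear: "linear (MF V)"
  by (rule linearI) (auto simp: MF_def matrix_vector_right_distrib matrix_vector_mult_scaleR)

lemma MF_sym:
  fixes V :: "real^'n^'n"
  assumes "transpose V = V" shows "x \<bullet> MF V y = MF V x \<bullet> y"
  by (cases x, cases y) (simp add: MF_def symV[OF assms])

lemma hamH_QF: "hamH V \<psi> = QF V \<psi> / 2"
proof -
  have a: "b \<bullet> b = (\<Sum>i\<in>UNIV. (b $ i)^2)" for b :: "real^'a"
    by (simp add: inner_vec_def power2_eq_square)
  have b: "a \<bullet> (V *v a) = (\<Sum>i\<in>UNIV. \<Sum>j\<in>UNIV. a $ i * (a $ j * V $ i $ j))" for a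
    by (simp add: inner_vec_def matrix_vector_mult_def sum_distrib_left ac_simps)
  show ?thesis unfolding hamH_def QF_def MF_def
    by (cases \<psi>) (simp add: a b field_simps)
qed

lemma QF_nonneg:
  fixes V :: "real^'n^'n"
  assumes posdef: "\<forall>x::real^'n. x \<noteq> 0 \<longrightarrow> x \<bullet> (V *v x) > 0"
  shows "QF V \<psi> \<ge> 0"
proof -
  have "fst \<psi> \<bullet> (V *v fst \<psi>) \<ge> 0" using posdef by (cases "fst \<psi> = 0") (auto intro: less_imp_le)
  then show ?thesis by (cases \<psi>) (simp add: QF_def MF_def add_nonneg_nonneg)
qed

lemma QF_pos:
  fixes V :: "real^'n^'n"
  assumes posdef: "\<forall>x::real^'n. x \<noteq> 0 \<longrightarrow> x \<bullet> (V *v x) > 0" and "\<psi> \<noteq> 0"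
  shows "QF V \<psi> > 0"
proof -
  obtain q p where qp: "\<psi> = (q, p)" by (cases \<psi>)
  have "q \<bullet> (V *v q) \<ge> 0" using posdef by (cases "q = 0") (auto intro: less_imp_le)
  show ?thesis
  proof (cases "q = 0")
    case True
    then have "p \<noteq> 0" using assms(2) qp by (auto simp: zero_prod_def)
    then show ?thesis using True by (simp add: QF_def MF_def qp)
  next
    case False
    then have "q \<bullet> (V *v q) > 0" using posdef by auto
    moreover have "p \<bullet> p \<ge> 0" by simp
    ultimately show ?thesis by (simp add: QF_def MF_def qp add_pos_nonneg)
  qed
qed

lemma QF_zero_iff:
  fixes V :: "real^'n^'n"
  assumes posdef: "\<forall>x::real^'n. x \<noteq> 0 \<longrightarrow> x \<bullet> (V *v x) > 0"
  shows "QF V \<psi> = 0 \<longleftrightarrow> \<psi> = 0"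
proof
  assume "QF V \<psi> = 0" then show "\<psi> = 0" using QF_pos[OF posdef, of \<psi>] by (metis less_irrefl)
next
  assume "\<psi> = 0" then show "QF V \<psi> = 0" by (simp add: QF_def MF_def zero_prod_def)
qed

lemma BF_A:
  fixes V :: "real^'n^'n"
  assumes symm: "transpose V = V"
  shows "x \<bullet> MF V (oscA V \<alpha> i0 x) = - \<alpha> * (snd x $ i0)^2"
proof -
  obtain q p where qp: "x = (q, p)" by (cases x)
  have "q \<bullet> (V *v p) = (V *v q) \<bullet> p" by (rule symV[OF symm])
  then show ?thesis
    by (simp add: qp oscA_eq MF_def inner_diff_right inner_axis power2_eq_square inner_commute)
qed

lemma QF_split:
  fixes V :: "real^'n^'n"
  assumes symm: "transpose V = V" and a: "a \<in> Lminus V i0" and b: "b \<in> orthogonal_comp (Lminus V i0)"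
  shows "QF V (a + b) = QF V a + QF V b"
proof -
  obtain q p where ab: "a = (q, p)" by (cases a)
  obtain q' p' where bb: "b = (q', p')" by (cases b)
  have hb: "\<forall>x\<in>lV V i0. q' \<bullet> x = 0 \<and> p' \<bullet> x = 0" using b by (simp add: L0_iff bb)
  have q: "q \<in> lV V i0" and p: "p \<in> lV V i0" using a by (auto simp: ab Lminus_Pair)
  have 1: "p \<bullet> p' = 0" using hb p by (metis inner_commute)
  have e1b: "p' \<bullet> p = 0" using 1 by (simp add: inner_commute)
  have 2: "q' \<bullet> (V *v q) = 0" using hb lV_Vinv[OF q] by simp
  have 3: "q \<bullet> (V *v q') = 0" using 2 symV[OF symm, of q q'] by (simp add: inner_commute)
  show ?thesis
    by (simp add: QF_def MF_def ab bb matrix_vector_right_distrib inner_add_left inner_add_right 1 e1b 2 3)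
qed

lemma funpow_sym:
  fixes V :: "real^'n^'n"
  assumes symm: "transpose V = V"
  shows "(((*v) V) ^^ k) x \<bullet> y = x \<bullet> (((*v) V) ^^ k) y"
proof (induction k arbitrary: x y)
  case (Suc k)
  have "(((*v) V) ^^ Suc k) x \<bullet> y = (((*v) V) ^^ k) (V *v x) \<bullet> y" by (simp add: funpow_Suc_right del: funpow.simps)
  also have "\<dots> = (V *v x) \<bullet> (((*v) V) ^^ k) y" by (rule Suc)
  also have "\<dots> = x \<bullet> (V *v (((*v) V) ^^ k) y)" by (simp add: symV[OF symm])
  finally show ?case by simp
qed simp

lemma perp_lV:
  assumes "\<And>k. x \<bullet> (((*v) V) ^^ k) (axis i0 1) = 0" and "x \<in> lV V i0"
  shows "x = 0"
proof -
  have "orthogonal x x"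
    using assms(2) unfolding lV_def
    by (rule orthogonal_to_span[OF _ ]) (use assms(1) in \<open>auto simp: orthogonal_def\<close>)
  then show ?thesis by (simp add: orthogonal_def)
qed

lemma AL:
  fixes V :: "real^'n^'n"
  assumes symm: "transpose V = V"
    and posdef: "\<forall>x::real^'n. x \<noteq> 0 \<longrightarrow> x \<bullet> (V *v x) > 0"
    and phi: "\<phi> \<in> Lminus V i0"
    and z: "\<And>k. snd (((oscA V \<alpha> i0) ^^ k) \<phi>) $ i0 = 0"
  shows "\<phi> = 0"
proof -
  define A0 where "A0 \<psi> = (snd \<psi>, - (V *v fst \<psi>))" for \<psi> :: "(real^'n) \<times> (real^'n)"
  define W where "W = (*v) V"
  have linW: "linear (W ^^ k)" for k unfolding W_def by (rule linear_funpow) simp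
  have eqA: "((oscA V \<alpha> i0) ^^ k) \<phi> = (A0 ^^ k) \<phi>" for k
  proof (induction k)
    case (Suc k)
    have "((oscA V \<alpha> i0) ^^ Suc k) \<phi> = oscA V \<alpha> i0 (((oscA V \<alpha> i0) ^^ k) \<phi>)" by simp
    also have "\<dots> = A0 (((oscA V \<alpha> i0) ^^ k) \<phi>)"
      using z[of k] by (cases "((oscA V \<alpha> i0) ^^ k) \<phi>") (simp add: oscA_eq A0_def)
    finally show ?case using Suc by simp
  qed simp
  obtain q p where qp: "\<phi> = (q, p)" by (cases \<phi>)
  have form: "(A0 ^^ (2*k)) \<phi> = ((-1)^k *\<^sub>R (W ^^ k) q, (-1)^k *\<^sub>R (W ^^ k) p) \<and>
      (A0 ^^ (Suc (2*k))) \<phi> = ((-1)^k *\<^sub>R (W ^^ k) p, - ((-1)^k *\<^sub>R (W ^^ Suc k) q))" for k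
  proof (induction k)
    case 0
    then show ?case by (simp add: qp A0_def W_def)
  next
    case (Suc k)
    have e1: "(A0 ^^ (2 * Suc k)) \<phi> = A0 ((A0 ^^ (Suc (2*k))) \<phi>)" by simp
    have e2: "(A0 ^^ (Suc (2 * Suc k))) \<phi> = A0 ((A0 ^^ (2 * Suc k)) \<phi>)" by simp
    have negV: "V *v (- x) = - (V *v x)" for x :: "real^'n"
      using linear_neg[OF matrix_vector_mul_linear[of V]] by simp
    have A0s: "A0 (x, y) = (y, - (V *v x))" for x y by (simp add: A0_def)
    have c1: "(A0 ^^ (2 * Suc k)) \<phi> = ((-1)^Suc k *\<^sub>R (W ^^ Suc k) q, (-1)^Suc k *\<^sub>R (W ^^ Suc k) p)"
      unfolding e1 Suc.IH[THEN conjunct2] A0s by (simp add: W_def matrix_vector_mult_scaleR)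
    have c2: "(A0 ^^ (Suc (2 * Suc k))) \<phi> = ((-1)^Suc k *\<^sub>R (W ^^ Suc k) p, - ((-1)^Suc k *\<^sub>R (W ^^ Suc (Suc k)) q))"
      unfolding e2 c1 A0s by (simp add: W_def matrix_vector_mult_scaleR negV)
    show ?case using c1 c2 by blast
  qed
  have pz: "((W ^^ k) p) $ i0 = 0" for k
    using z[of "2*k"] form[of k] eqA[of "2*k"] by simp
  have qz: "((W ^^ Suc k) q) $ i0 = 0" for k
  proof -
    have "snd ((A0 ^^ Suc (2*k)) \<phi>) $ i0 = 0" using z[of "Suc (2*k)"] unfolding eqA .
    then have "(-1)^k * ((W ^^ Suc k) q) $ i0 = 0"
      unfolding form[of k, THEN conjunct2] by (simp del: funpow.simps)
    then show ?thesis by simp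
  qed
  have lp: "p \<in> lV V i0" and lq: "q \<in> lV V i0" using phi by (auto simp: qp Lminus_Pair)
  have "p = 0"
  proof (rule perp_lV[OF _ lp])
    fix k
    have "p \<bullet> (((*v) V) ^^ k) (axis i0 1) = (((*v) V) ^^ k) p \<bullet> axis i0 1"
      by (simp add: funpow_sym[OF symm])
    also have "\<dots> = 0" using pz[of k] by (simp add: inner_axis W_def)
    finally show "p \<bullet> (((*v) V) ^^ k) (axis i0 1) = 0" .
  qed
  moreover have "V *v q = 0"
  proof (rule perp_lV[OF _ lV_Vinv[OF lq]])
    fix k
    have "(V *v q) \<bullet> (((*v) V) ^^ k) (axis i0 1) = (((*v) V) ^^ k) (V *v q) \<bullet> axis i0 1"
      by (simp add: funpow_sym[OF symm])
    also have "\<dots> = ((W ^^ Suc k) q) $ i0"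
      by (simp add: inner_axis W_def funpow_Suc_right del: funpow.simps)
    also have "\<dots> = 0" by (rule qz)
    finally show "(V *v q) \<bullet> (((*v) V) ^^ k) (axis i0 1) = 0" .
  qed
  then have "q = 0" using posdef by (metis inner_zero_right less_irrefl)
  ultimately show ?thesis by (simp add: qp zero_prod_def)
qed

lemma eig_neg:
  fixes V :: "real^'n^'n"
  assumes symm: "transpose V = V"
    and posdef: "\<forall>x::real^'n. x \<noteq> 0 \<longrightarrow> x \<bullet> (V *v x) > 0"
    and alpha: "\<alpha> > 0"
    and ev: "complex_eigenvalue_on (oscA V \<alpha> i0) (Lminus V i0) lam"
  shows "Re lam < 0"
proof -
  define a b where "a = Re lam" and "b = Im lam"
  obtain u v where uv: "u \<in> Lminus V i0" "v \<in> Lminus V i0" "u \<noteq> 0 \<or> v \<noteq> 0"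
    and Au: "oscA V \<alpha> i0 u = a *\<^sub>R u - b *\<^sub>R v" and Av: "oscA V \<alpha> i0 v = b *\<^sub>R u + a *\<^sub>R v"
    using ev unfolding complex_eigenvalue_on_def a_def b_def by blast
  have lin: "linear (MF V)" by (rule MF_linear)
  have sym: "u \<bullet> MF V v = v \<bullet> MF V u"
    using MF_sym[OF symm, of u v] by (simp add: inner_commute)
  have e1: "u \<bullet> MF V (oscA V \<alpha> i0 u) = a * QF V u - b * (u \<bullet> MF V v)"
    by (simp add: Au linear_diff[OF lin] linear_scale[OF lin] inner_diff_right QF_def)
  have e2: "v \<bullet> MF V (oscA V \<alpha> i0 v) = b * (v \<bullet> MF V u) + a * QF V v"
    by (simp add: Av linear_add[OF lin] linear_scale[OF lin] inner_add_right QF_def)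
  have key: "a * (QF V u + QF V v) = - \<alpha> * ((snd u $ i0)^2 + (snd v $ i0)^2)"
    using e1 e2 sym BF_A[OF symm, of u \<alpha> i0] BF_A[OF symm, of v \<alpha> i0]
    by (simp add: algebra_simps)
  have pos: "QF V u + QF V v > 0"
    using uv(3) QF_pos[OF posdef, of u] QF_pos[OF posdef, of v] QF_nonneg[OF posdef, of u] QF_nonneg[OF posdef, of v]
    by auto
  have rhs: "- \<alpha> * ((snd u $ i0)^2 + (snd v $ i0)^2) \<le> 0"
    using alpha by (simp add: mult_nonneg_nonneg)
  have "a \<le> 0"
  proof (rule ccontr)
    assume "\<not> a \<le> 0"
    then have "a * (QF V u + QF V v) > 0" using pos by simp
    then show False using key rhs by simp
  qed
  moreover have "a \<noteq> 0"
  proof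
    assume a0: "a = 0"
    have "(snd u $ i0)^2 + (snd v $ i0)^2 = 0" using key a0 alpha by simp
    then have su: "snd u $ i0 = 0" and sv: "snd v $ i0 = 0"
      by (simp_all add: add_nonneg_eq_0_iff)
    have span: "\<exists>c d. ((oscA V \<alpha> i0) ^^ k) w = c *\<^sub>R u + d *\<^sub>R v" if w: "w = u \<or> w = v" for k w
    proof (induction k)
      case 0
      show ?case
      proof (cases "w = u")
        case True then show ?thesis by (intro exI[of _ 1] exI[of _ 0]) simp
      next
        case False then have "w = v" using w by simp
        then show ?thesis by (intro exI[of _ 0] exI[of _ 1]) simp
      qed
    next
      case (Suc k)
      then obtain c d where cd: "((oscA V \<alpha> i0) ^^ k) w = c *\<^sub>R u + d *\<^sub>R v" by blast
      have "((oscA V \<alpha> i0) ^^ Suc k) w = oscA V \<alpha> i0 (c *\<^sub>R u + d *\<^sub>R v)" by (simp add: cd)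
      also have "\<dots> = c *\<^sub>R oscA V \<alpha> i0 u + d *\<^sub>R oscA V \<alpha> i0 v"
        by (simp add: linear_add[OF oscA_linear] linear_scale[OF oscA_linear])
      also have "\<dots> = (d * b) *\<^sub>R u + (- (c * b)) *\<^sub>R v"
        by (simp add: Au Av a0 algebra_simps)
      finally show ?case by blast
    qed
    have zz: "snd (((oscA V \<alpha> i0) ^^ k) w) $ i0 = 0" if wuv: "w = u \<or> w = v" for k w
    proof -
      obtain c d where "((oscA V \<alpha> i0) ^^ k) w = c *\<^sub>R u + d *\<^sub>R v" using span[of w k] wuv by blast
      then show ?thesis by (simp add: su sv)
    qed
    have "u = 0" by (rule AL[OF symm posdef uv(1)]) (rule zz, simp)
    moreover have "v = 0" by (rule AL[OF symm posdef uv(2)]) (rule zz, simp)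
    ultimately show False using uv(3) by simp
  qed
  ultimately show ?thesis unfolding a_def by simp
qed

lemma expA_in_subspace:
  fixes A :: "'a::euclidean_space \<Rightarrow> 'a"
  assumes lin: "linear A" and S: "subspace S" "closed S" and inv: "\<And>x. x \<in> S \<Longrightarrow> A x \<in> S"
    and x: "x \<in> S"
  shows "expA A t x \<in> S"
proof -
  have pw: "(A ^^ k) x \<in> S" for k by (induction k) (simp_all add: x inv)
  have lim: "(\<lambda>n. \<Sum>k<n. (t ^ k / fact k) *\<^sub>R ((A ^^ k) x)) \<longlonglongrightarrow> expA A t x"
    using expA_sums[OF lin] unfolding sums_def .
  have mem: "(\<Sum>k<n. (t ^ k / fact k) *\<^sub>R ((A ^^ k) x)) \<in> S" for n
    by (rule subspace_sum[OF S(1)]) (simp add: subspace_scale[OF S(1)] pw)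
  show ?thesis by (rule closed_sequentially[OF S(2) mem lim])
qed

lemma L0_subspace: "subspace (orthogonal_comp (Lminus V i0))"
  by (rule subspace_orthogonal_comp)

lemma expA_Lminus: "\<psi> \<in> Lminus V i0 \<Longrightarrow> expA (oscA V \<alpha> i0) t \<psi> \<in> Lminus V i0"
  by (rule expA_in_subspace[OF oscA_linear Lminus_subspace Lminus_closed oscA_Lminus])

lemma expA_L0:
  fixes V :: "real^'n^'n"
  assumes symm: "transpose V = V"
  shows "\<psi> \<in> orthogonal_comp (Lminus V i0) \<Longrightarrow> expA (oscA V \<alpha> i0) t \<psi> \<in> orthogonal_comp (Lminus V i0)"
  by (rule expA_in_subspace[OF oscA_linear L0_subspace closed_subspace[OF L0_subspace] oscA_L0[OF symm]])

lemma energy_deriv: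
  fixes V :: "real^'n^'n"
  assumes symm: "transpose V = V"
  shows "((\<lambda>t. QF V (expA (oscA V \<alpha> i0) t \<psi>)) has_real_derivative
      - 2 * \<alpha> * (snd (expA (oscA V \<alpha> i0) t \<psi>) $ i0)^2) (at t)"
proof -
  let ?A = "oscA V \<alpha> i0"
  let ?x = "\<lambda>t. expA ?A t \<psi>"
  have dx: "(?x has_vector_derivative ?A (?x t)) (at t)"
    using expA_deriv[OF oscA_linear[of V \<alpha> i0], of \<psi> t] by (simp add: expA_comm[OF oscA_linear])
  have blM: "bounded_linear (MF V)" using MF_linear by (simp add: linear_conv_bounded_linear)
  have dM: "((\<lambda>t. MF V (?x t)) has_vector_derivative MF V (?A (?x t))) (at t)"
    by (rule bounded_linear.has_vector_derivative[OF blM dx])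
  have "((\<lambda>t. ?x t \<bullet> MF V (?x t)) has_vector_derivative (?x t \<bullet> MF V (?A (?x t)) + ?A (?x t) \<bullet> MF V (?x t))) (at t)"
    by (rule bounded_bilinear.has_vector_derivative[OF bounded_bilinear_inner dx dM])
  moreover have "?x t \<bullet> MF V (?A (?x t)) + ?A (?x t) \<bullet> MF V (?x t) = - 2 * \<alpha> * (snd (?x t) $ i0)^2"
    using BF_A[OF symm, of "?x t" \<alpha> i0] MF_sym[OF symm, of "?A (?x t)" "?x t"]
    by (simp add: inner_commute)
  ultimately show ?thesis unfolding QF_def by (simp add: has_real_derivative_iff_has_vector_derivative)
qed

lemma energy_mono:
  fixes V :: "real^'n^'n"
  assumes symm: "transpose V = V" and alpha: "\<alpha> > 0" and st: "s \<le> t"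
  shows "QF V (expA (oscA V \<alpha> i0) t \<psi>) \<le> QF V (expA (oscA V \<alpha> i0) s \<psi>)"
proof (rule DERIV_nonpos_imp_nonincreasing[OF st])
  fix x
  show "\<exists>y. ((\<lambda>t. QF V (expA (oscA V \<alpha> i0) t \<psi>)) has_real_derivative y) (at x) \<and> y \<le> 0"
    using energy_deriv[OF symm, of \<alpha> i0 \<psi> x] alpha by (intro exI conjI) (auto simp: mult_nonneg_nonneg)
qed

lemma energy_const_L0:
  fixes V :: "real^'n^'n"
  assumes symm: "transpose V = V" and psi: "\<psi> \<in> orthogonal_comp (Lminus V i0)"
  shows "QF V (expA (oscA V \<alpha> i0) t \<psi>) = QF V \<psi>"
proof -
  have z: "snd (expA (oscA V \<alpha> i0) s \<psi>) $ i0 = 0" for s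
  proof -
    have "expA (oscA V \<alpha> i0) s \<psi> \<in> orthogonal_comp (Lminus V i0)" by (rule expA_L0[OF symm psi])
    then have "snd (expA (oscA V \<alpha> i0) s \<psi>) \<bullet> axis i0 1 = 0"
      using axis_in_lV[of i0 V] by (simp add: L0_iff)
    then show ?thesis by (simp add: inner_axis)
  qed
  have "\<forall>s. ((\<lambda>t. QF V (expA (oscA V \<alpha> i0) t \<psi>)) has_real_derivative 0) (at s)"
    using energy_deriv[OF symm, of \<alpha> i0 \<psi>] z by simp
  from DERIV_isconst_all[OF this, of t 0] show ?thesis by (simp add: expA_zero[OF oscA_linear])
qed

lemma snd_i0_bl: "bounded_linear (\<lambda>x::(real^'n) \<times> (real^'n). snd x $ i)"
  using bounded_linear_compose[OF bounded_linear_vec_nth[of i] bounded_linear_snd] by (simp add: o_def)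

lemma strict_decrease:
  fixes V :: "real^'n^'n"
  assumes symm: "transpose V = V"
    and posdef: "\<forall>x::real^'n. x \<noteq> 0 \<longrightarrow> x \<bullet> (V *v x) > 0"
    and alpha: "\<alpha> > 0"
    and psi: "\<psi> \<in> Lminus V i0" "\<psi> \<noteq> 0"
  shows "QF V (expA (oscA V \<alpha> i0) 1 \<psi>) < QF V \<psi>"
proof (rule ccontr)
  let ?A = "oscA V \<alpha> i0"
  let ?E = "expA ?A"
  assume "\<not> QF V (?E 1 \<psi>) < QF V \<psi>"
  then have ge: "QF V (?E 1 \<psi>) \<ge> QF V \<psi>" by simp
  have const: "QF V (?E s \<psi>) = QF V \<psi>" if "0 \<le> s" "s \<le> 1" for s
  proof -
    have "QF V (?E s \<psi>) \<le> QF V (?E 0 \<psi>)" by (rule energy_mono[OF symm alpha that(1)])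
    moreover have "QF V (?E 1 \<psi>) \<le> QF V (?E s \<psi>)" by (rule energy_mono[OF symm alpha that(2)])
    ultimately show ?thesis using ge by (simp add: expA_zero[OF oscA_linear])
  qed
  define h where "h k s = snd (?E s ((?A ^^ k) \<psi>)) $ i0" for k s
  have hd: "((h k) has_real_derivative h (Suc k) s) (at s)" for k s
  proof -
    have "((\<lambda>s. ?E s ((?A ^^ k) \<psi>)) has_vector_derivative ?E s (?A ((?A ^^ k) \<psi>))) (at s)"
      by (rule expA_deriv[OF oscA_linear])
    from bounded_linear.has_vector_derivative[OF snd_i0_bl[of i0] this]
    show ?thesis unfolding h_def by (simp add: has_real_derivative_iff_has_vector_derivative)
  qed
  have hz: "h k s = 0" if "0 < s" "s < 1" for k s
    using that
  proof (induction k arbitrary: s)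
    case 0
    have "- 2 * \<alpha> * (snd (?E s \<psi>) $ i0)^2 = 0"
    proof (rule DERIV_local_const[OF energy_deriv[OF symm]])
      show "0 < min s (1 - s)" using 0 by simp
      show "\<forall>y. \<bar>s - y\<bar> < min s (1 - s) \<longrightarrow> QF V (?E s \<psi>) = QF V (?E y \<psi>)"
        using 0 by (auto simp: const)
    qed
    then show ?case using alpha by (simp add: h_def)
  next
    case (Suc k)
    show ?case
    proof (rule DERIV_local_const[OF hd[of k s]])
      show "0 < min s (1 - s)" using Suc by simp
      show "\<forall>y. \<bar>s - y\<bar> < min s (1 - s) \<longrightarrow> h k s = h k y"
        using Suc.IH Suc.prems by (auto simp: abs_if split: if_splits)
    qed
  qed
  define \<phi> where "\<phi> = ?E (1/2) \<psi>"
  have phiL: "\<phi> \<in> Lminus V i0" unfolding \<phi>_def by (rule expA_Lminus[OF psi(1)])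
  have "snd ((?A ^^ k) \<phi>) $ i0 = 0" for k
    using hz[of "1/2" k] by (simp add: h_def \<phi>_def expA_comm_pow[OF oscA_linear])
  then have "\<phi> = 0" by (rule AL[OF symm posdef phiL])
  then have "?E (- (1/2)) \<phi> = 0" using linear_0[OF expA_linear[OF oscA_linear]] by simp
  moreover have "?E (- (1/2)) \<phi> = \<psi>" unfolding \<phi>_def by (rule expA_inv[OF oscA_linear])
  ultimately show False using psi(2) by simp
qed

lemma QF_scale: "QF V (c *\<^sub>R x) = c^2 * QF V x"
  by (simp add: QF_def linear_scale[OF MF_linear] power2_eq_square)

lemma QF_zero [simp]: "QF V 0 = 0"
  by (simp add: QF_def MF_def zero_prod_def)

lemma cont_QF_lin:
  fixes f :: "'a::euclidean_space \<Rightarrow> (real^'n) \<times> (real^'n)"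
  assumes "linear f"
  shows "continuous_on S (\<lambda>\<psi>. QF V (f \<psi>))"
proof -
  have "bounded_linear f" using assms by (simp add: linear_conv_bounded_linear)
  moreover have "bounded_linear (\<lambda>\<psi>. MF V (f \<psi>))"
    using linear_compose[OF assms MF_linear[of V]] by (simp add: o_def linear_conv_bounded_linear)
  ultimately show ?thesis unfolding QF_def
    by (intro continuous_on_inner linear_continuous_on)
qed

lemma QF_ratio:
  assumes "linear f" "x \<noteq> 0"
  shows "QF V (f ((1 / norm x) *\<^sub>R x)) / QF V ((1 / norm x) *\<^sub>R x) = QF V (f x) / QF V x"
  using assms by (simp add: linear_scale QF_scale power2_eq_square)

lemma QF_lower:
  fixes V :: "real^'n^'n"
  assumes posdef: "\<forall>x::real^'n. x \<noteq> 0 \<longrightarrow> x \<bullet> (V *v x) > 0"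
  obtains c where "c > 0" "\<And>x. c * (norm x)^2 \<le> QF V x"
proof -
  let ?S = "sphere (0 :: (real^'n) \<times> (real^'n)) 1"
  obtain b :: "(real^'n) \<times> (real^'n)" where "b \<in> Basis" using nonempty_Basis by blast
  then have "b \<in> ?S" by simp
  then have ne: "?S \<noteq> {}" by blast
  have cq: "continuous_on ?S (\<lambda>\<psi>. QF V \<psi>)" by (rule cont_QF_lin[OF linear_ident])
  then obtain x0 where x0: "x0 \<in> ?S" "\<And>y. y \<in> ?S \<Longrightarrow> QF V x0 \<le> QF V y"
    using continuous_attains_inf[OF compact_sphere ne cq] by blast
  have c0: "QF V x0 > 0" using x0(1) by (intro QF_pos[OF posdef]) auto
  show ?thesis
  proof (rule that[OF c0])
    fix x :: "(real^'n) \<times> (real^'n)"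
    show "QF V x0 * (norm x)^2 \<le> QF V x"
    proof (cases "x = 0")
      case True then show ?thesis by simp
    next
      case False
      have "QF V x0 \<le> QF V ((1 / norm x) *\<^sub>R x)" using False by (intro x0(2)) simp
      also have "\<dots> = QF V x / (norm x)^2" using False by (simp add: QF_scale power2_eq_square field_simps)
      finally show ?thesis using False by (simp add: field_simps)
    qed
  qed
qed

lemma QF_upper:
  obtains C where "C > 0" "\<And>x. QF V x \<le> C * (norm x)^2"
proof -
  obtain K where K: "K > 0" "\<And>x. norm (MF V x) \<le> K * norm x"
    using linear_bounded_pos[OF MF_linear] by blast
  show ?thesis
  proof (rule that[OF K(1)])
    fix x
    have "QF V x \<le> norm x * norm (MF V x)" unfolding QF_def by (rule norm_cauchy_schwarz)
    also have "\<dots> \<le> norm x * (K * norm x)" by (rule mult_left_mono[OF K(2)]) simp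
    finally show "QF V x \<le> K * (norm x)^2" by (simp add: power2_eq_square ac_simps)
  qed
qed

lemma contraction:
  fixes V :: "real^'n^'n"
  assumes symm: "transpose V = V"
    and posdef: "\<forall>x::real^'n. x \<noteq> 0 \<longrightarrow> x \<bullet> (V *v x) > 0"
    and alpha: "\<alpha> > 0"
  obtains \<delta> where "0 < \<delta>" "\<delta> < 1" "\<And>\<psi>. \<psi> \<in> Lminus V i0 \<Longrightarrow> QF V (expA (oscA V \<alpha> i0) 1 \<psi>) \<le> \<delta> * QF V \<psi>"
proof -
  let ?E = "expA (oscA V \<alpha> i0) 1"
  let ?S = "sphere 0 1 \<inter> Lminus V i0"
  let ?f = "\<lambda>\<psi>. QF V (?E \<psi>) / QF V \<psi>"
  have linE: "linear ?E" by (rule expA_linear[OF oscA_linear])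
  have cpt: "compact ?S" by (rule compact_Int_closed[OF compact_sphere Lminus_closed])
  have "(axis i0 1, 0) \<in> ?S"
    using axis_in_lV[of i0 V] lV_subspace[of V i0] by (simp add: Lminus_Pair subspace_0)
  then have ne: "?S \<noteq> {}" by blast
  have pos: "QF V \<psi> \<noteq> 0" if "\<psi> \<in> ?S" for \<psi>
  proof -
    have "\<psi> \<noteq> 0" using that by auto
    then show ?thesis using QF_pos[OF posdef, of \<psi>] by simp
  qed
  have cont: "continuous_on ?S ?f"
    by (rule continuous_on_divide[OF cont_QF_lin[OF linE] cont_QF_lin[OF linear_ident]]) (use pos in auto)
  obtain \<psi>0 where \<psi>0: "\<psi>0 \<in> ?S" "\<And>y. y \<in> ?S \<Longrightarrow> ?f y \<le> ?f \<psi>0"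
    using continuous_attains_sup[OF cpt ne cont] by auto
  have n0: "\<psi>0 \<noteq> 0" using \<psi>0(1) by auto
  have qpos: "QF V \<psi>0 > 0" using QF_pos[OF posdef n0] .
  have "QF V (?E \<psi>0) < QF V \<psi>0" using \<psi>0(1) n0 by (intro strict_decrease[OF symm posdef alpha]) auto
  then have d1: "?f \<psi>0 < 1" using qpos by simp
  define \<delta> where "\<delta> = max (?f \<psi>0) (1/2)"
  show ?thesis
  proof (rule that)
    show "0 < \<delta>" "\<delta> < 1" using d1 by (auto simp: \<delta>_def)
    fix \<psi> assume psi: "\<psi> \<in> Lminus V i0"
    show "QF V (?E \<psi>) \<le> \<delta> * QF V \<psi>"
    proof (cases "\<psi> = 0")
      case True then show ?thesis by (simp add: linear_0[OF linE])
    next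
      case False
      have "(1 / norm \<psi>) *\<^sub>R \<psi> \<in> ?S"
        using psi False by (simp add: subspace_scale[OF Lminus_subspace])
      then have "?f ((1 / norm \<psi>) *\<^sub>R \<psi>) \<le> ?f \<psi>0" by (rule \<psi>0(2))
      then have "QF V (?E \<psi>) / QF V \<psi> \<le> \<delta>"
        unfolding QF_ratio[OF linE False] \<delta>_def by simp
      moreover have "QF V \<psi> > 0" using QF_pos[OF posdef False] .
      ultimately show ?thesis by (simp add: divide_le_eq)
    qed
  qed
qed

lemma decay_QF:
  fixes V :: "real^'n^'n"
  assumes symm: "transpose V = V"
    and posdef: "\<forall>x::real^'n. x \<noteq> 0 \<longrightarrow> x \<bullet> (V *v x) > 0"
    and alpha: "\<alpha> > 0"
  obtains \<delta> where "0 < \<delta>" "\<delta> < 1"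
    "\<And>t \<psi>. 0 \<le> t \<Longrightarrow> \<psi> \<in> Lminus V i0 \<Longrightarrow> QF V (expA (oscA V \<alpha> i0) t \<psi>) \<le> \<delta> powr (t - 1) * QF V \<psi>"
proof -
  let ?E = "expA (oscA V \<alpha> i0)"
  obtain \<delta> where d: "0 < \<delta>" "\<delta> < 1" "\<And>\<psi>. \<psi> \<in> Lminus V i0 \<Longrightarrow> QF V (?E 1 \<psi>) \<le> \<delta> * QF V \<psi>"
    using contraction[OF symm posdef alpha] by blast
  have it: "QF V (?E (real n) \<psi>) \<le> \<delta> ^ n * QF V \<psi>" if psi: "\<psi> \<in> Lminus V i0" for n \<psi>
  proof (induction n)
    case 0
    then show ?case by (simp add: expA_zero[OF oscA_linear])
  next
    case (Suc n)
    have "?E (real (Suc n)) \<psi> = ?E 1 (?E (real n) \<psi>)"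
      using expA_add[OF oscA_linear, of V \<alpha> i0 1 "real n" \<psi>] by (simp add: add.commute)
    also have "QF V \<dots> \<le> \<delta> * QF V (?E (real n) \<psi>)" by (rule d(3)[OF expA_Lminus[OF psi]])
    also have "\<dots> \<le> \<delta> * (\<delta> ^ n * QF V \<psi>)" by (rule mult_left_mono[OF Suc]) (use d in simp)
    finally show ?case by simp
  qed
  show ?thesis
  proof (rule that[OF d(1,2)])
    fix t :: real and \<psi> assume t: "0 \<le> t" and psi: "\<psi> \<in> Lminus V i0"
    define n where "n = nat \<lfloor>t\<rfloor>"
    have fl: "real_of_int \<lfloor>t\<rfloor> \<le> t" "t < real_of_int \<lfloor>t\<rfloor> + 1" by linarith+
    have fl0: "\<lfloor>t\<rfloor> \<ge> 0" using t by simp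
    have n1: "real n \<le> t" and n2: "t - 1 \<le> real n" using fl fl0 by (simp_all add: n_def)
    have "QF V (?E t \<psi>) \<le> QF V (?E (real n) \<psi>)" by (rule energy_mono[OF symm alpha n1])
    also have "\<dots> \<le> \<delta> ^ n * QF V \<psi>" by (rule it[OF psi])
    also have "\<delta> ^ n = \<delta> powr (real n)" using d(1) by (simp add: powr_realpow)
    also have "\<delta> powr (real n) * QF V \<psi> \<le> \<delta> powr (t - 1) * QF V \<psi>"
      by (rule mult_right_mono[OF powr_mono'[OF n2]]) (use d QF_nonneg[OF posdef] in auto)
    finally show "QF V (?E t \<psi>) \<le> \<delta> powr (t - 1) * QF V \<psi>" .
  qed
qed

lemma decay_norm:
  fixes V :: "real^'n^'n"
  assumes symm: "transpose V = V"
    and posdef: "\<forall>x::real^'n. x \<noteq> 0 \<longrightarrow> x \<bullet> (V *v x) > 0"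
    and alpha: "\<alpha> > 0"
  shows "\<exists>C k. k > 0 \<and> (\<forall>t\<ge>0. \<forall>\<psi>\<in>Lminus V i0.
          norm (expA (oscA V \<alpha> i0) t \<psi>) \<le> C * exp (- k * t) * norm \<psi>)"
proof -
  let ?E = "expA (oscA V \<alpha> i0)"
  obtain \<delta> where d: "0 < \<delta>" "\<delta> < 1"
    "\<And>t \<psi>. 0 \<le> t \<Longrightarrow> \<psi> \<in> Lminus V i0 \<Longrightarrow> QF V (?E t \<psi>) \<le> \<delta> powr (t - 1) * QF V \<psi>"
    using decay_QF[OF symm posdef alpha] by blast
  obtain c where c: "c > 0" "\<And>x. c * (norm x)^2 \<le> QF V x" using QF_lower[OF posdef] by blast
  obtain C where C: "C > 0" "\<And>x. QF V x \<le> C * (norm x)^2" using QF_upper by blast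
  define k where "k = - ln \<delta> / 2"
  define Cc where "Cc = sqrt (C / (c * \<delta>))"
  have k: "k > 0" using d by (simp add: k_def)
  have "\<forall>t\<ge>0. \<forall>\<psi>\<in>Lminus V i0. norm (?E t \<psi>) \<le> Cc * exp (- k * t) * norm \<psi>"
  proof (intro allI impI ballI)
    fix t :: real and \<psi> assume t: "0 \<le> t" and psi: "\<psi> \<in> Lminus V i0"
    have e2: "exp (- k * t) ^ 2 = \<delta> powr t"
      using d(1) by (simp add: k_def powr_def exp_double[symmetric] power2_eq_square exp_add[symmetric] algebra_simps)
    have e2': "(exp (- (k * t)))^2 = \<delta> powr t" using e2 by simp
    have pd: "\<delta> powr (t - 1) = \<delta> powr t / \<delta>" using d(1) by (simp add: powr_diff)
    have "c * (norm (?E t \<psi>))^2 \<le> \<delta> powr (t - 1) * QF V \<psi>"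
      using c(2)[of "?E t \<psi>"] d(3)[OF t psi] by linarith
    also have "\<dots> \<le> \<delta> powr (t - 1) * (C * (norm \<psi>)^2)"
      by (rule mult_left_mono[OF C(2)]) simp
    finally have "(norm (?E t \<psi>))^2 \<le> \<delta> powr (t - 1) * (C * (norm \<psi>)^2) / c"
      using c(1) by (simp add: field_simps)
    also have "\<dots> = (Cc * exp (- k * t) * norm \<psi>)^2"
      using c(1) C(1) d(1) by (simp add: Cc_def power_mult_distrib e2 e2' pd field_simps)
    finally show "norm (?E t \<psi>) \<le> Cc * exp (- k * t) * norm \<psi>"
      by (rule power2_le_imp_le) (use c(1) C(1) d(1) in \<open>auto simp: Cc_def intro!: mult_nonneg_nonneg\<close>)
  qed
  then show ?thesis using k by blast
qed

lemma char_Lminus: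
  fixes V :: "real^'n^'n"
  assumes symm: "transpose V = V"
    and posdef: "\<forall>x::real^'n. x \<noteq> 0 \<longrightarrow> x \<bullet> (V *v x) > 0"
    and alpha: "\<alpha> > 0"
  shows "Lminus V i0 = {\<psi>. ((\<lambda>t. hamH V (expA (oscA V \<alpha> i0) t \<psi>)) \<longlongrightarrow> 0) at_top}"
proof -
  let ?E = "expA (oscA V \<alpha> i0)"
  obtain \<delta> where d: "0 < \<delta>" "\<delta> < 1"
    "\<And>t \<psi>. 0 \<le> t \<Longrightarrow> \<psi> \<in> Lminus V i0 \<Longrightarrow> QF V (?E t \<psi>) \<le> \<delta> powr (t - 1) * QF V \<psi>"
    using decay_QF[OF symm posdef alpha] by blast
  have lim: "((\<lambda>t. QF V (?E t \<psi>)) \<longlongrightarrow> 0) at_top" if psi: "\<psi> \<in> Lminus V i0" for \<psi>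
  proof (rule tendsto_sandwich[of "\<lambda>_. 0" _ _ "\<lambda>t. \<delta> powr (t - 1) * QF V \<psi>"])
    show "\<forall>\<^sub>F t in at_top. 0 \<le> QF V (?E t \<psi>)" by (simp add: QF_nonneg[OF posdef])
    show "\<forall>\<^sub>F t in at_top. QF V (?E t \<psi>) \<le> \<delta> powr (t - 1) * QF V \<psi>"
      using eventually_ge_at_top[of "0::real"] by eventually_elim (rule d(3)[OF _ psi])
    have "((\<lambda>t::real. \<delta> powr (t - 1)) \<longlongrightarrow> 0) at_top" using d by real_asymp
    then show "((\<lambda>t. \<delta> powr (t - 1) * QF V \<psi>) \<longlongrightarrow> 0) at_top"
      by (auto intro: tendsto_mult_left_zero)
  qed simp
  show ?thesis
  proof (intro set_eqI iffI)
    fix \<psi> assume "\<psi> \<in> Lminus V i0"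
    from tendsto_divide[OF lim[OF this] tendsto_const[of 2]]
    show "\<psi> \<in> {\<psi>. ((\<lambda>t. hamH V (?E t \<psi>)) \<longlongrightarrow> 0) at_top}" by (simp add: hamH_QF)
  next
    fix \<psi> assume "\<psi> \<in> {\<psi>. ((\<lambda>t. hamH V (?E t \<psi>)) \<longlongrightarrow> 0) at_top}"
    then have h: "((\<lambda>t. hamH V (?E t \<psi>)) \<longlongrightarrow> 0) at_top" by simp
    have hq: "((\<lambda>t. QF V (?E t \<psi>)) \<longlongrightarrow> 0) at_top"
      using tendsto_mult[OF h tendsto_const[of 2]] by (simp add: hamH_QF)
    obtain y z where y: "y \<in> span (Lminus V i0)" and z: "\<And>w. w \<in> span (Lminus V i0) \<Longrightarrow> orthogonal z w"
      and yz: "\<psi> = y + z"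
      using orthogonal_subspace_decomp_exists[of "Lminus V i0" \<psi>] by blast
    have yL: "y \<in> Lminus V i0" using y by (metis span_eq_iff Lminus_subspace)
    have zL: "z \<in> orthogonal_comp (Lminus V i0)"
      using z span_superset[of "Lminus V i0"] unfolding orthogonal_comp_def
      by (auto simp: orthogonal_commute)
    have split: "QF V (?E t \<psi>) = QF V (?E t y) + QF V z" for t
    proof -
      have "?E t \<psi> = ?E t y + ?E t z" using yz linear_add[OF expA_linear[OF oscA_linear]] by simp
      then have "QF V (?E t \<psi>) = QF V (?E t y) + QF V (?E t z)"
        using QF_split[OF symm expA_Lminus[OF yL] expA_L0[OF symm zL]] by simp
      then show ?thesis using energy_const_L0[OF symm zL] by simp
    qed
    have "((\<lambda>t. QF V (?E t \<psi>) - QF V (?E t y)) \<longlongrightarrow> 0 - 0) at_top"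
      by (rule tendsto_diff[OF hq lim[OF yL]])
    then have "((\<lambda>t::real. QF V z) \<longlongrightarrow> 0) at_top" by (simp add: split)
    then have "QF V z = 0" by (simp add: tendsto_const_iff)
    then have "z = 0" using QF_zero_iff[OF posdef] by simp
    then show "\<psi> \<in> Lminus V i0" using yL yz by simp
  qed
qed

theorem mainTheorem16:
  fixes V :: "real^'n^'n" and \<alpha> :: real and i0 :: 'n
  assumes symm: "transpose V = V"
    and posdef: "\<forall>x::real^'n. x \<noteq> 0 \<longrightarrow> x \<bullet> (V *v x) > 0"
    and alpha: "\<alpha> > 0"
  shows "oscA V \<alpha> i0 ` Lminus V i0 \<subseteq> Lminus V i0
    \<and> oscA V \<alpha> i0 ` orthogonal_comp (Lminus V i0) \<subseteq> orthogonal_comp (Lminus V i0)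
    \<and> (\<forall>lam. complex_eigenvalue_on (oscA V \<alpha> i0) (Lminus V i0) lam \<longrightarrow> Re lam < 0)
    \<and> (\<exists>C k. k > 0 \<and> (\<forall>t\<ge>0. \<forall>\<psi>\<in>Lminus V i0.
          norm (expA (oscA V \<alpha> i0) t \<psi>) \<le> C * exp (- k * t) * norm \<psi>))
    \<and> Lminus V i0 = {\<psi>. ((\<lambda>t. hamH V (expA (oscA V \<alpha> i0) t \<psi>)) \<longlongrightarrow> 0) at_top}"
proof (intro conjI allI impI)
  show "oscA V \<alpha> i0 ` Lminus V i0 \<subseteq> Lminus V i0" using oscA_Lminus by blast
  show "oscA V \<alpha> i0 ` orthogonal_comp (Lminus V i0) \<subseteq> orthogonal_comp (Lminus V i0)"
    using oscA_L0[OF symm] by blast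
  show "Re lam < 0" if "complex_eigenvalue_on (oscA V \<alpha> i0) (Lminus V i0) lam" for lam
    by (rule eig_neg[OF symm posdef alpha that])
  show "\<exists>C k. k > 0 \<and> (\<forall>t\<ge>0. \<forall>\<psi>\<in>Lminus V i0.
          norm (expA (oscA V \<alpha> i0) t \<psi>) \<le> C * exp (- k * t) * norm \<psi>)"
    by (rule decay_norm[OF symm posdef alpha])
  show "Lminus V i0 = {\<psi>. ((\<lambda>t. hamH V (expA (oscA V \<alpha> i0) t \<psi>)) \<longlongrightarrow> 0) at_top}"
    by (rule char_Lminus[OF symm posdef alpha])
qed

end
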